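(* Consider the two-species chemostat $$\dot x_1=(\mu_1(s)-D(t)-b_1)x_1,\quad \dot x_2=(\mu_2(s)-D(t)-b_2)x_2,\quad \dot s=D(t)(s_{in}(t)-s)-g_1(s)x_1-g_2(s)x_2,$$ with state $(x_1,x_2,s)\in(0,+\infty)^2\times A$ and output $y=s$, in either of the admissible settings described in the context. Define $\kappa(s):=\frac{d}{ds}\ln\left(\frac{g_1(s)}{g_2(s)}\right)$ for $s>0$. Suppose that, for some $r>0$, this system is not strongly observable in time $r$. Then there exist an admissible input $(D,s_{in})$ on $[0,r]$ and an initial condition $(x_0,s_0)$ with $x_0=(x_{1,0},x_{2,0})\in(0,+\infty)^2$, $s_0\in A$, such that the $s$-component $s(t)$ of the corresponding solution satisfies, for almost all $t\in[0,r]$, $$\dot s(t)=D(t)(s_{in}(t)-s(t))-\left(x_{2,0}+\frac{g_1(s_0)}{g_2(s_0)}x_{1,0}\right)g_2(s(t))\exp\left(\int_0^t(\mu_2(s(w))-D(w)-b_2)\,dw\right)$$ and $$\kappa(s(t))\,\dot s(t)=\mu_2(s(t))-\mu_1(s(t))+b_1-b_2 .$$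
   Context: For $i=1,2$: $\mu_i,g_i:[0,+\infty)\to[0,+\infty)$ are continuously differentiable bounded functions with $\mu_i(0)=g_i(0)=0$ and $\mu_i(s)>0$, $g_i(s)>0$ for all $s>0$; $b_i\ge 0$ are constants. Admissible settings: either (i) $A=(0,+\infty)$ and the inputs are measurable essentially bounded functions $(D,s_{in})$ with values in $[0,+\infty)^2$; or (ii) $s_{in}(t)\equiv s_{in}>0$ is a fixed constant, $A=(0,s_{in})$, and the input is a measurable essentially bounded $D$ with values in $[0,+\infty)$. For every admissible input and initial state in $(0,+\infty)^2\times A$ there is a unique solution remaining in $(0,+\infty)^2\times A$ for all $t\ge0$. The system is strongly observable in time $r>0$ if for every admissible input on $[0,r]$ and every two distinct initial states in $(0,+\infty)^2\times A$, the $s$-components $s(t),\bar s(t)$ of the two corresponding solutions satisfy $\max_{t\in[0,r]}|s(t)-\bar s(t)|>0$. *)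

theory Defs
  imports "HOL-Analysis.Analysis"
begin

definition C1_nonneg :: "(real \<Rightarrow> real) \<Rightarrow> bool" where
  "C1_nonneg f \<longleftrightarrow> (\<exists>f'. continuous_on {0..} f' \<and>
       (\<forall>x\<ge>0. (f has_real_derivative f' x) (at x within {0..})))"

definition rate_fun :: "(real \<Rightarrow> real) \<Rightarrow> bool" where
  "rate_fun f \<longleftrightarrow> C1_nonneg f \<and> bounded (f ` {0..}) \<and> f 0 = 0
      \<and> (\<forall>s\<ge>0. f s \<ge> 0) \<and> (\<forall>s>0. f s > 0)"

text \<open>Admissible settings: sc = None is setting (i), A = (0,+inf), input (D, s_in);
  sc = Some c is setting (ii), s_in constant equal to c > 0, A = (0,c).\<close>
definition state_set :: "real option \<Rightarrow> real set" where
  "state_set sc = (case sc of None \<Rightarrow> {0<..} | Some c \<Rightarrow> {0<..<c})"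

definition ess_bounded_on :: "real set \<Rightarrow> (real \<Rightarrow> real) \<Rightarrow> bool" where
  "ess_bounded_on S f \<longleftrightarrow> (\<exists>B. AE t in lebesgue. t \<in> S \<longrightarrow> \<bar>f t\<bar> \<le> B)"

definition admissible_input :: "real option \<Rightarrow> real \<Rightarrow> (real \<Rightarrow> real) \<Rightarrow> (real \<Rightarrow> real) \<Rightarrow> bool" where
  "admissible_input sc r D s_in \<longleftrightarrow>
     D measurable_on {0..r} \<and> ess_bounded_on {0..r} D \<and> (\<forall>t\<in>{0..r}. D t \<ge> 0) \<and>
     (case sc of
        None \<Rightarrow> s_in measurable_on {0..r} \<and> ess_bounded_on {0..r} s_in \<and> (\<forall>t\<in>{0..r}. s_in t \<ge> 0)
      | Some c \<Rightarrow> (\<forall>t\<in>{0..r}. s_in t = c))"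

text \<open>(Caratheodory) solution on [0,r] of the chemostat, staying in (0,+inf)^2 x A,
  in integral form: absolutely continuous with the ODE holding a.e.\<close>
definition chemostat_sol ::
  "(real \<Rightarrow> real) \<Rightarrow> (real \<Rightarrow> real) \<Rightarrow> (real \<Rightarrow> real) \<Rightarrow> (real \<Rightarrow> real) \<Rightarrow> real \<Rightarrow> real \<Rightarrow>
   real option \<Rightarrow> real \<Rightarrow> (real \<Rightarrow> real) \<Rightarrow> (real \<Rightarrow> real) \<Rightarrow>
   (real \<Rightarrow> real) \<Rightarrow> (real \<Rightarrow> real) \<Rightarrow> (real \<Rightarrow> real) \<Rightarrow> bool" where
  "chemostat_sol mu1 mu2 g1 g2 b1 b2 sc r D s_in x1 x2 s \<longleftrightarrow>
     (\<forall>t\<in>{0..r}. x1 t > 0 \<and> x2 t > 0 \<and> s t \<in> state_set sc) \<and>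
     (\<lambda>w. (mu1 (s w) - D w - b1) * x1 w) absolutely_integrable_on {0..r} \<and>
     (\<lambda>w. (mu2 (s w) - D w - b2) * x2 w) absolutely_integrable_on {0..r} \<and>
     (\<lambda>w. D w * (s_in w - s w) - g1 (s w) * x1 w - g2 (s w) * x2 w) absolutely_integrable_on {0..r} \<and>
     (\<forall>t\<in>{0..r}.
        x1 t = x1 0 + integral {0..t} (\<lambda>w. (mu1 (s w) - D w - b1) * x1 w) \<and>
        x2 t = x2 0 + integral {0..t} (\<lambda>w. (mu2 (s w) - D w - b2) * x2 w) \<and>
        s t = s 0 + integral {0..t} (\<lambda>w. D w * (s_in w - s w) - g1 (s w) * x1 w - g2 (s w) * x2 w))"

definition strongly_observable ::
  "(real \<Rightarrow> real) \<Rightarrow> (real \<Rightarrow> real) \<Rightarrow> (real \<Rightarrow> real) \<Rightarrow> (real \<Rightarrow> real) \<Rightarrow> real \<Rightarrow> real \<Rightarrow>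
   real option \<Rightarrow> real \<Rightarrow> bool" where
  "strongly_observable mu1 mu2 g1 g2 b1 b2 sc r \<longleftrightarrow>
     (\<forall>D s_in x1 x2 s x1' x2' s'.
        admissible_input sc r D s_in \<and>
        chemostat_sol mu1 mu2 g1 g2 b1 b2 sc r D s_in x1 x2 s \<and>
        chemostat_sol mu1 mu2 g1 g2 b1 b2 sc r D s_in x1' x2' s' \<and>
        (x1 0, x2 0, s 0) \<noteq> (x1' 0, x2' 0, s' 0)
        \<longrightarrow> (SUP t\<in>{0..r}. \<bar>s t - s' t\<bar>) > 0)"

definition kappa :: "(real \<Rightarrow> real) \<Rightarrow> (real \<Rightarrow> real) \<Rightarrow> real \<Rightarrow> real" where
  "kappa g1 g2 s = deriv (\<lambda>u. ln (g1 u / g2 u)) s"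

end

theory Submission
  imports Defs
begin

lemma int_lip:
  fixes f :: "real \<Rightarrow> real"
  assumes f: "f integrable_on {0..r}" and N: "negligible N"
    and b: "\<And>w. w \<in> {0..r} - N \<Longrightarrow> \<bar>f w\<bar> \<le> M"
    and s: "s \<in> {0..r}" and t: "t \<in> {0..r}" and M: "0 \<le> M"
  shows "\<bar>integral {0..t} f - integral {0..s} f\<bar> \<le> M * \<bar>t - s\<bar>"
proof -
  have main: "\<bar>integral {0..t} f - integral {0..s} f\<bar> \<le> M * (t - s)"
    if s: "s \<in> {0..r}" and t: "t \<in> {0..r}" and st: "s \<le> t" for s t
  proof -
    have ft: "f integrable_on {0..t}" using integrable_on_subinterval[OF f] t by auto
    have "integral {0..s} f + integral {s..t} f = integral {0..t} f"
      using Henstock_Kurzweil_Integration.integral_combine[OF _ st ft] s by auto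
    then have eq: "integral {0..t} f - integral {0..s} f = integral {s..t} f" by simp
    have fst: "f integrable_on {s..t}" using integrable_on_subinterval[OF f] s t by auto
    define g where "g = (\<lambda>w. if w \<in> N then 0 else f w)"
    have gi: "integral {s..t} f = integral {s..t} g"
      by (rule integral_spike[OF N]) (auto simp: g_def)
    have gint: "g integrable_on {s..t}"
      by (rule integrable_spike[OF fst N]) (auto simp: g_def)
    have "norm (integral {s..t} g) \<le> integral {s..t} (\<lambda>_. M)"
    proof (rule integral_norm_bound_integral[OF gint])
      show "(\<lambda>_. M) integrable_on {s..t}" by (rule integrable_const_ivl)
      fix x assume "x \<in> {s..t}"
      then have "x \<in> {0..r}" using s t by auto
      then show "norm (g x) \<le> M" using b[of x] M by (auto simp: g_def)
    qed
    then show ?thesis using eq gi st by (simp add: mult.commute)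
  qed
  show ?thesis
  proof (cases "s \<le> t")
    case True then show ?thesis using main[OF s t] by simp
  next
    case False then show ?thesis using main[OF t s] by (simp add: abs_minus_commute)
  qed
qed

lemma lebesgue_diff:
  fixes f :: "real \<Rightarrow> real"
  assumes f: "f integrable_on {0..r}"
  obtains N where "negligible N"
    "\<And>t. t \<in> {0<..<r} - N \<Longrightarrow> ((\<lambda>u. integral {0..u} f) has_real_derivative f t) (at t)"
proof -
  define f0 where "f0 = (\<lambda>w. if w \<in> {0..r} then f w else 0)"
  have f0U: "f0 integrable_on UNIV" unfolding f0_def using f integrable_restrict_UNIV by blast
  have f0c: "f0 integrable_on cbox a b" for a b
    by (rule integrable_on_subcbox[OF f0U]) auto
  define g0 where "g0 = (\<lambda>w. f0 (- w))"
  have g0c: "g0 integrable_on cbox a b" for a b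
  proof -
    have "f0 integrable_on {-b..-a}" using f0c[of "-b" "-a"] by simp
    then have "(\<lambda>x. f0 (-x)) integrable_on {a .. b}"
      using Henstock_Kurzweil_Integration.integrable_reflect_real[where f=f0 and a="-b" and b="-a"] by simp
    then show ?thesis by (simp add: g0_def)
  qed
  obtain N1 where N1: "negligible N1"
    and N1e: "\<And>x e. \<lbrakk>x \<notin> N1; 0 < e\<rbrakk> \<Longrightarrow>
               \<exists>d>0. \<forall>h. 0 < h \<and> h < d \<longrightarrow>
                         norm(integral (cbox x (x + h *\<^sub>R One)) f0 /\<^sub>R h ^ DIM(real) - f0 x) < e"
    using integrable_ccontinuous_explicit[of f0] f0c by blast
  obtain N2 where N2: "negligible N2"
    and N2e: "\<And>x e. \<lbrakk>x \<notin> N2; 0 < e\<rbrakk> \<Longrightarrow>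
               \<exists>d>0. \<forall>h. 0 < h \<and> h < d \<longrightarrow>
                         norm(integral (cbox x (x + h *\<^sub>R One)) g0 /\<^sub>R h ^ DIM(real) - g0 x) < e"
    using integrable_ccontinuous_explicit[of g0] g0c by blast
  have N2': "negligible (uminus ` N2)"
    by (rule negligible_differentiable_image_negligible[OF _ N2]) (auto intro!: derivative_intros)
  show ?thesis
  proof (rule that[of "N1 \<union> uminus ` N2"])
    show "negligible (N1 \<union> uminus ` N2)" using N1 N2' by auto
    fix t assume t: "t \<in> {0<..<r} - (N1 \<union> uminus ` N2)"
    then have t1: "t \<notin> N1" and t2: "-t \<notin> N2" and t0: "0 < t" "t < r"
      by (auto simp: image_iff)
    define F where "F = (\<lambda>u. integral {0..u} f)"
    have right: "\<exists>d>0. \<forall>h. 0 < h \<and> h < d \<longrightarrow> \<bar>integral {t..t+h} f0 / h - f t\<bar> < e" if "e > 0" for e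
      using N1e[OF t1 that] t0 by (simp add: f0_def divide_inverse_commute)
    have left: "\<exists>d>0. \<forall>h. 0 < h \<and> h < d \<longrightarrow> \<bar>integral {t-h..t} f0 / h - f t\<bar> < e" if e: "e > 0" for e
    proof -
      obtain d where d: "d > 0" "\<And>h. 0 < h \<and> h < d \<Longrightarrow> \<bar>integral {-t..-t+h} g0 / h - g0 (-t)\<bar> < e"
        using N2e[OF t2 e] by (auto simp: divide_inverse_commute)
      have "integral {-t..-t+h} g0 = integral {t-h..t} f0" for h
        using Henstock_Kurzweil_Integration.integral_reflect_real[where f=f0 and a="t-h" and b=t] by (simp add: g0_def)
      then show ?thesis using d t0 by (auto simp: g0_def f0_def)
    qed
    have "((\<lambda>y. (F y - F t) / (y - t)) \<longlongrightarrow> f t) (at t)"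
    proof (rule tendstoI)
      fix e :: real assume e: "e > 0"
      obtain d1 where d1: "d1 > 0" "\<And>h. 0 < h \<and> h < d1 \<Longrightarrow> \<bar>integral {t..t+h} f0 / h - f t\<bar> < e"
        using right[OF e] by blast
      obtain d2 where d2: "d2 > 0" "\<And>h. 0 < h \<and> h < d2 \<Longrightarrow> \<bar>integral {t-h..t} f0 / h - f t\<bar> < e"
        using left[OF e] by blast
      show "\<forall>\<^sub>F y in at t. dist ((F y - F t) / (y - t)) (f t) < e"
        unfolding eventually_at
      proof (intro exI[of _ "min (min d1 d2) (min t (r - t))"] conjI ballI impI)
        show "0 < min (min d1 d2) (min t (r - t))" using d1 d2 t0 by auto
        fix y assume "y \<in> UNIV" and y: "y \<noteq> t \<and> dist y t < min (min d1 d2) (min t (r - t))"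
        then have yr: "0 < y" "y < r" using t0 by (auto simp: dist_real_def)
        show "dist ((F y - F t) / (y - t)) (f t) < e"
        proof (cases "t < y")
          case True
          have "integral {0..t} f + integral {t..y} f = integral {0..y} f"
            by (rule Henstock_Kurzweil_Integration.integral_combine)
               (use True t0 yr in \<open>auto intro: integrable_on_subinterval[OF f]\<close>)
          then have "F y - F t = integral {t..y} f" by (simp add: F_def)
          also have "\<dots> = integral {t..y} f0"
            by (rule integral_cong) (use t0 yr in \<open>auto simp: f0_def\<close>)
          also have "\<dots> = integral {t..t+(y-t)} f0" by simp
          finally show ?thesis using d1(2)[of "y - t"] y True
            by (simp add: dist_real_def)
        next
          case False
          then have yt: "y < t" using y by auto
          have "integral {0..y} f + integral {y..t} f = integral {0..t} f"
            by (rule Henstock_Kurzweil_Integration.integral_combine)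
               (use yt t0 yr in \<open>auto intro: integrable_on_subinterval[OF f]\<close>)
          then have "F y - F t = - integral {y..t} f" by (simp add: F_def)
          also have "\<dots> = - integral {y..t} f0"
            by (simp, rule integral_cong) (use t0 yr in \<open>auto simp: f0_def\<close>)
          also have "\<dots> = - integral {t-(t-y)..t} f0" by simp
          finally have eq: "F y - F t = - integral {t-(t-y)..t} f0" .
          have "(F y - F t) / (y - t) = (- integral {t-(t-y)..t} f0) / (- (t - y))"
            by (simp only: eq) simp
          then have "(F y - F t) / (y - t) = integral {t-(t-y)..t} f0 / (t - y)"
            by (metis minus_diff_eq minus_divide_divide)
          then show ?thesis using d2(2)[of "t - y"] y yt
            by (simp add: dist_real_def)
        qed
      qed
    qed
    then show "((\<lambda>u. integral {0..u} f) has_real_derivative f t) (at t)"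
      unfolding has_field_derivative_iff F_def by simp
  qed
qed

lemma zero_deriv_negl:
  fixes F :: "real \<Rightarrow> real"
  assumes d: "\<And>t. t \<in> S \<Longrightarrow> (F has_real_derivative 0) (at t)"
  shows "negligible (F ` S)"
proof -
  let ?lift = "vec :: real \<Rightarrow> real^1"
  let ?G = "\<lambda>x::real^1. ?lift (F (x $ 1))"
  have der: "(?G has_derivative (\<lambda>h. 0)) (at x within ?lift ` S)" if x: "x \<in> ?lift ` S" for x
  proof -
    obtain z where z: "z \<in> S" "x = vec z" using x by auto
    have h: "(F has_derivative (*) 0) (at z within S)"
      using has_field_derivative_at_within[OF d[OF z(1)]] unfolding has_field_derivative_def .
    have e: "(\<lambda>x::real. x * 0) = (*) 0" by auto
    have "(F has_derivative (\<lambda>x. x * 0)) (at z within S)"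
      by (simp only: e h)
    from has_derivative_vector_1[where g' = "\<lambda>_. 0", OF this]
    have h2: "(?G has_derivative (*\<^sub>R) 0) (at (vec z) within ?lift ` S)" by simp
    have e2: "((*\<^sub>R) (0::real)) = (\<lambda>h::real^1. 0::real^1)" by auto
    show ?thesis using h2 z by (simp only: e2)
  qed
  have "negligible (?G ` (?lift ` S))"
  proof (rule baby_Sard[where f' = "\<lambda>x h. 0"])
    show "CARD(1) \<le> CARD(1)" by simp
    show "\<And>x. x \<in> ?lift ` S \<Longrightarrow> (?G has_derivative (\<lambda>h. 0)) (at x within ?lift ` S)"
      using der by blast
    have "matrix (\<lambda>h::real^1. 0::real^1) = 0"
      by (simp add: matrix_def vec_eq_iff)
    then show "rank (matrix (\<lambda>h::real^1. 0::real^1)) < CARD(1)" by simp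
  qed
  moreover have "F ` S = (\<lambda>x::real^1. x $ 1) ` (?G ` (?lift ` S))"
    by (simp add: image_image)
  moreover have "negligible ((\<lambda>x::real^1. x $ 1) ` T)" if "negligible T" for T
    by (rule negligible_differentiable_image_negligible[OF _ that])
       (auto intro: bounded_linear_imp_differentiable_on[OF bounded_linear_vec_nth])
  ultimately show ?thesis by simp
qed

lemma lip_const:
  fixes F :: "real \<Rightarrow> real"
  assumes L: "\<And>s t. s \<in> {0..r} \<Longrightarrow> t \<in> {0..r} \<Longrightarrow> \<bar>F t - F s\<bar> \<le> L * \<bar>t - s\<bar>"
    and N: "negligible N"
    and d: "\<And>t. t \<in> {0<..<r} - N \<Longrightarrow> (F has_real_derivative 0) (at t)"
    and t: "t \<in> {0..r}"
  shows "F t = F 0"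
proof (rule ccontr)
  assume ne: "F t \<noteq> F 0"
  define A where "A = {0..r} \<inter> (N \<union> {0, r})"
  have negA: "negligible A"
    by (rule negligible_subset[of "N \<union> {0, r}"]) (use N in \<open>auto simp: A_def\<close>)
  have nFA: "negligible (F ` A)"
  proof (rule negligible_locally_Lipschitz_image[OF _ negA])
    show "DIM(real) \<le> DIM(real)" by simp
    fix x assume x: "x \<in> A"
    show "\<exists>T B. open T \<and> x \<in> T \<and> (\<forall>y\<in>A \<inter> T. norm (F y - F x) \<le> B * norm (y - x))"
    proof (intro exI[of _ UNIV] exI[of _ L] conjI ballI)
      fix y assume "y \<in> A \<inter> UNIV"
      then have y: "y \<in> {0..r}" by (simp add: A_def)
      have "x \<in> {0..r}" using x by (simp add: A_def)
      then show "norm (F y - F x) \<le> L * norm (y - x)" using L[of x y] y by simp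
    qed auto
  qed
  have nFB: "negligible (F ` ({0<..<r} - N))"
    by (rule zero_deriv_negl) (use d in auto)
  have sub: "{0..r} \<subseteq> A \<union> ({0<..<r} - N)" by (auto simp: A_def)
  have nF: "negligible (F ` {0..r})"
    by (rule negligible_subset[of "F ` A \<union> F ` ({0<..<r} - N)"]) (use nFA nFB sub in auto)
  have Lnn: "L \<ge> 0" if "r > 0"
  proof -
    have "\<bar>F r - F 0\<bar> \<le> L * \<bar>r - 0\<bar>" using L[of 0 r] that by auto
    then show ?thesis using that by (smt (verit) abs_ge_zero zero_le_mult_iff)
  qed
  have r0: "0 < r" using t ne by (cases "t = 0") auto
  have cont: "continuous_on {0..r} F"
    unfolding continuous_on_iff
  proof (intro ballI allI impI)
    fix x e assume x: "x \<in> {0..r}" and e: "(0::real) < e"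
    show "\<exists>d>0. \<forall>x'\<in>{0..r}. dist x' x < d \<longrightarrow> dist (F x') (F x) < e"
    proof (intro exI[of _ "e / (L + 1)"] conjI ballI impI)
      show "0 < e / (L + 1)" using e Lnn[OF r0] by simp
      fix y assume y: "y \<in> {0..r}" and dy: "dist y x < e / (L + 1)"
      have "\<bar>F y - F x\<bar> \<le> L * \<bar>y - x\<bar>" using L[OF x y] .
      also have "\<dots> \<le> L * (e / (L + 1))" using dy Lnn[OF r0]
        by (intro mult_left_mono) (auto simp: dist_real_def)
      also have "\<dots> < e" using e Lnn[OF r0] by (simp add: field_simps)
      finally show "dist (F y) (F x) < e" by (simp add: dist_real_def)
    qed
  qed
  have conn: "connected (F ` {0..r})"
    by (rule connected_continuous_image[OF cont]) simp
  have in0: "F 0 \<in> F ` {0..r}" using r0 by auto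
  have int: "F t \<in> F ` {0..r}" using t by auto
  have "{min (F 0) (F t) <..< max (F 0) (F t)} \<subseteq> F ` {0..r}"
  proof
    fix z assume z: "z \<in> {min (F 0) (F t) <..< max (F 0) (F t)}"
    show "z \<in> F ` {0..r}"
    proof (cases "F 0 \<le> F t")
      case True then show ?thesis using connectedD_interval[OF conn in0 int, of z] z by auto
    next
      case False then show ?thesis using connectedD_interval[OF conn int in0, of z] z by auto
    qed
  qed
  then have "negligible {min (F 0) (F t) <..< max (F 0) (F t)}"
    using nF negligible_subset by blast
  moreover have "{min (F 0) (F t) <..< max (F 0) (F t)} \<noteq> {}" using ne
    by (auto simp: min_def max_def dense)
  ultimately show False using open_not_negligible[of "{min (F 0) (F t) <..< max (F 0) (F t)}"]
    by auto
qed

lemma exp_lip: "\<bar>exp p - exp q\<bar> \<le> max (exp p) (exp q) * \<bar>p - q\<bar>" for p q :: real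
proof -
  have 1: "exp q - exp p \<le> exp q * (q - p)" for p q :: real
  proof -
    have "exp (p - q) \<ge> 1 + (p - q)" by (rule exp_ge_add_one_self)
    then have "exp q * exp (p - q) \<ge> exp q * (1 + (p - q))" by (simp add: mult_left_mono)
    then show ?thesis by (simp add: exp_diff algebra_simps)
  qed
  show ?thesis
  proof (cases "p \<le> q")
    case True
    then have "\<bar>exp p - exp q\<bar> = exp q - exp p" by simp
    also have "\<dots> \<le> exp q * (q - p)" by (rule 1)
    also have "\<dots> \<le> max (exp p) (exp q) * \<bar>p - q\<bar>" using True
      by (intro mult_mono) auto
    finally show ?thesis .
  next
    case False
    then have "\<bar>exp p - exp q\<bar> = exp p - exp q" by simp
    also have "\<dots> \<le> exp p * (p - q)" by (rule 1)
    also have "\<dots> \<le> max (exp p) (exp q) * \<bar>p - q\<bar>" using False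
      by (intro mult_mono) auto
    finally show ?thesis .
  qed
qed

lemma lin_exp:
  fixes a x :: "real \<Rightarrow> real"
  assumes a: "a integrable_on {0..r}" and N: "negligible N"
    and ab: "\<And>w. w \<in> {0..r} - N \<Longrightarrow> \<bar>a w\<bar> \<le> M" and M: "0 \<le> M"
    and xc: "continuous_on {0..r} x"
    and ax: "(\<lambda>w. a w * x w) integrable_on {0..r}"
    and eq: "\<And>t. t \<in> {0..r} \<Longrightarrow> x t = x 0 + integral {0..t} (\<lambda>w. a w * x w)"
    and t: "t \<in> {0..r}"
  shows "x t = x 0 * exp (integral {0..t} a)"
proof -
  have r0: "0 \<le> r" using t by auto
  obtain B where B: "\<And>w. w \<in> {0..r} \<Longrightarrow> \<bar>x w\<bar> \<le> B" and B0: "0 \<le> B"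
  proof -
    have "compact (x ` {0..r})" by (rule compact_continuous_image[OF xc]) simp
    then have "bounded (x ` {0..r})" by (rule compact_imp_bounded)
    then obtain B where "B > 0" "\<And>y. y \<in> x ` {0..r} \<Longrightarrow> norm y \<le> B"
      unfolding bounded_pos by blast
    then show ?thesis using that[of B] by auto
  qed
  define E where "E = (\<lambda>t. integral {0..t} a)"
  have Elip: "\<bar>E t - E s\<bar> \<le> M * \<bar>t - s\<bar>" if "s \<in> {0..r}" "t \<in> {0..r}" for s t
    unfolding E_def by (rule int_lip[OF a N ab that M])
  have E0: "E 0 = 0" by (simp add: E_def)
  have Eb: "\<bar>E t\<bar> \<le> M * r" if "t \<in> {0..r}" for t
  proof -
    have "\<bar>E t - E 0\<bar> \<le> M * \<bar>t - 0\<bar>" by (rule Elip) (use that r0 in auto)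
    then have "\<bar>E t\<bar> \<le> M * t" using that by (simp add: E0)
    also have "\<dots> \<le> M * r" using that M by (intro mult_left_mono) auto
    finally show ?thesis .
  qed
  have xlip: "\<bar>x t - x s\<bar> \<le> (M * B) * \<bar>t - s\<bar>" if s: "s \<in> {0..r}" and t: "t \<in> {0..r}" for s t
  proof -
    have "\<bar>x t - x s\<bar> = \<bar>integral {0..t} (\<lambda>w. a w * x w) - integral {0..s} (\<lambda>w. a w * x w)\<bar>"
      using eq[OF s] eq[OF t] by simp
    also have "\<dots> \<le> (M * B) * \<bar>t - s\<bar>"
    proof (rule int_lip[OF ax N _ s t])
      show "0 \<le> M * B" using M B0 by simp
      fix w assume w: "w \<in> {0..r} - N"
      have "\<bar>a w * x w\<bar> = \<bar>a w\<bar> * \<bar>x w\<bar>" by (simp add: abs_mult)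
      also have "\<dots> \<le> M * B" using ab[OF w] B[of w] w M by (intro mult_mono) auto
      finally show "\<bar>a w * x w\<bar> \<le> M * B" .
    qed
    finally show ?thesis .
  qed
  define C where "C = exp (M * r)"
  have eC: "exp (- E t) \<le> C" if "t \<in> {0..r}" for t
    using Eb[OF that] unfolding C_def by simp
  define u where "u = (\<lambda>t. x t * exp (- E t))"
  have ulip: "\<bar>u t - u s\<bar> \<le> (M * B * C + B * C * M) * \<bar>t - s\<bar>"
    if s: "s \<in> {0..r}" and t: "t \<in> {0..r}" for s t
  proof -
    have ue: "u t - u s = (x t - x s) * exp (- E t) + x s * (exp (- E t) - exp (- E s))"
      by (simp add: u_def algebra_simps)
    have "\<bar>u t - u s\<bar> \<le> \<bar>(x t - x s) * exp (- E t)\<bar> + \<bar>x s * (exp (- E t) - exp (- E s))\<bar>"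
      unfolding ue by (rule abs_triangle_ineq)
    then have "\<bar>u t - u s\<bar> \<le> \<bar>x t - x s\<bar> * exp (- E t) + \<bar>x s\<bar> * \<bar>exp (- E t) - exp (- E s)\<bar>"
      by (simp add: abs_mult)
    also have "\<dots> \<le> ((M * B) * \<bar>t - s\<bar>) * C + B * (C * (M * \<bar>t - s\<bar>))"
    proof (intro add_mono mult_mono)
      show "\<bar>x t - x s\<bar> \<le> M * B * \<bar>t - s\<bar>" by (rule xlip[OF s t])
      show "exp (- E t) \<le> C" by (rule eC[OF t])
      show "\<bar>x s\<bar> \<le> B" by (rule B[OF s])
      have "\<bar>exp (- E t) - exp (- E s)\<bar> \<le> max (exp (- E t)) (exp (- E s)) * \<bar>- E t - - E s\<bar>"
        by (rule exp_lip)
      also have "\<dots> \<le> C * (M * \<bar>t - s\<bar>)"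
      proof (rule mult_mono)
        show "max (exp (- E t)) (exp (- E s)) \<le> C" using eC[OF t] eC[OF s] by simp
        show "\<bar>- E t - - E s\<bar> \<le> M * \<bar>t - s\<bar>" using Elip[OF s t] by simp
        show "0 \<le> C" by (simp add: C_def)
      qed simp
      finally show "\<bar>exp (- E t) - exp (- E s)\<bar> \<le> C * (M * \<bar>t - s\<bar>)" .
    qed (use M B0 in \<open>auto simp: C_def\<close>)
    also have "\<dots> = (M * B * C + B * C * M) * \<bar>t - s\<bar>" by (simp add: algebra_simps)
    finally show ?thesis .
  qed
  obtain Na where Na: "negligible Na"
    and dE: "\<And>t. t \<in> {0<..<r} - Na \<Longrightarrow> (E has_real_derivative a t) (at t)"
    using lebesgue_diff[OF a] unfolding E_def by blast
  obtain Nx where Nx: "negligible Nx"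
    and dI: "\<And>t. t \<in> {0<..<r} - Nx \<Longrightarrow>
        ((\<lambda>u. integral {0..u} (\<lambda>w. a w * x w)) has_real_derivative a t * x t) (at t)"
    using lebesgue_diff[OF ax] by blast
  have du: "(u has_real_derivative 0) (at t)" if t: "t \<in> {0<..<r} - (Na \<union> Nx)" for t
  proof -
    have dx0: "((\<lambda>u. x 0 + integral {0..u} (\<lambda>w. a w * x w)) has_real_derivative a t * x t) (at t)"
      using DERIV_add[OF DERIV_const dI[of t]] t by simp
    have dx: "(x has_real_derivative a t * x t) (at t)"
      by (rule has_field_derivative_transform_within_open[OF dx0, of "{0<..<r}"])
         (use t in \<open>auto simp: eq[symmetric]\<close>)
    have "(u has_real_derivative (a t * x t) * exp (- E t) + (exp (- E t) * (- a t)) * x t) (at t)"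
      unfolding u_def
      by (rule DERIV_mult[OF dx DERIV_fun_exp[OF DERIV_minus[OF dE]]]) (use t in auto)
    then show ?thesis by (simp add: algebra_simps)
  qed
  have "u t = u 0"
    by (rule lip_const[where N="Na \<union> Nx", OF ulip _ du t]) (use Na Nx in auto)
  then have "x t * exp (- E t) = x 0" by (simp add: u_def E0)
  then have "x t = x 0 * exp (E t)"
  proof -
    have "x t = (x t * exp (- E t)) * exp (E t)" by (simp add: exp_minus field_simps)
    then show ?thesis using \<open>x t * exp (- E t) = x 0\<close> by simp
  qed
  then show ?thesis by (simp add: E_def)
qed

lemma rate_cont: assumes "rate_fun f" shows "continuous_on {0..} f"
proof -
  obtain f' where "\<forall>x\<ge>0. (f has_real_derivative f' x) (at x within {0..})"
    using assms unfolding rate_fun_def C1_nonneg_def by blast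
  then show ?thesis by (intro DERIV_continuous_on[of "{0..}" f f']) auto
qed

lemma rate_deriv: assumes "rate_fun f" and u: "u > 0"
  obtains d where "(f has_real_derivative d) (at u)"
proof -
  obtain f' where f': "\<forall>x\<ge>0. (f has_real_derivative f' x) (at x within {0..})"
    using assms unfolding rate_fun_def C1_nonneg_def by blast
  have "interior {0::real..} = {0<..}" by (rule interior_Ici[of "-1"]) simp
  then have "at u within {0..} = at u" using u by (intro at_within_interior) simp
  then show ?thesis using f' u that by (metis less_imp_le)
qed

lemma rate_bound: assumes "rate_fun f" obtains B where "B > 0" "\<And>y. y \<ge> 0 \<Longrightarrow> \<bar>f y\<bar> \<le> B"
proof -
  have "bounded (f ` {0..})" using assms unfolding rate_fun_def by blast
  then obtain B where "B > 0" "\<And>y. y \<in> f ` {0..} \<Longrightarrow> norm y \<le> B"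
    unfolding bounded_pos by blast
  then show ?thesis using that[of B] by auto
qed

lemma kappa_deriv:
  assumes g1: "rate_fun g1" and g2: "rate_fun g2" and u: "u > 0"
  shows "((\<lambda>v. ln (g1 v / g2 v)) has_real_derivative kappa g1 g2 u) (at u)"
proof -
  obtain d1 where d1: "(g1 has_real_derivative d1) (at u)" using rate_deriv[OF g1 u] by blast
  obtain d2 where d2: "(g2 has_real_derivative d2) (at u)" using rate_deriv[OF g2 u] by blast
  have p1: "g1 u > 0" and p2: "g2 u > 0" using g1 g2 u unfolding rate_fun_def by auto
  have dq: "((\<lambda>v. g1 v / g2 v) has_real_derivative (d1 * g2 u - g1 u * d2) / (g2 u * g2 u)) (at u)"
    by (rule DERIV_divide[OF d1 d2]) (use p2 in simp)
  have "((\<lambda>v. ln (g1 v / g2 v)) has_real_derivative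
          inverse (g1 u / g2 u) * ((d1 * g2 u - g1 u * d2) / (g2 u * g2 u))) (at u)"
    by (rule DERIV_chain2[OF DERIV_ln dq]) (use p1 p2 in simp)
  moreover then have "kappa g1 g2 u = inverse (g1 u / g2 u) * ((d1 * g2 u - g1 u * d2) / (g2 u * g2 u))"
    unfolding kappa_def by (rule DERIV_imp_deriv)
  ultimately show ?thesis by simp
qed

lemma comp_exp:
  fixes mu s D x :: "real \<Rightarrow> real" and r b BD t :: real
  assumes mu: "rate_fun mu" and sc: "continuous_on {0..r} s" and sp: "\<And>t. t \<in> {0..r} \<Longrightarrow> s t > 0"
    and Di: "D integrable_on {0..r}" and ND: "negligible ND"
    and DB: "\<And>w. w \<in> {0..r} - ND \<Longrightarrow> \<bar>D w\<bar> \<le> BD"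
    and xc: "continuous_on {0..r} x"
    and ax: "(\<lambda>w. (mu (s w) - D w - b) * x w) integrable_on {0..r}"
    and eq: "\<And>t. t \<in> {0..r} \<Longrightarrow> x t = x 0 + integral {0..t} (\<lambda>w. (mu (s w) - D w - b) * x w)"
    and t: "t \<in> {0..r}"
  shows "x t = x 0 * exp (integral {0..t} (\<lambda>w. mu (s w) - D w - b))"
proof -
  obtain Bm where Bm: "Bm > 0" "\<And>y. y \<ge> 0 \<Longrightarrow> \<bar>mu y\<bar> \<le> Bm" using rate_bound[OF mu] by blast
  have msc: "continuous_on {0..r} (\<lambda>w. mu (s w))"
    by (rule continuous_on_compose2[OF rate_cont[OF mu] sc]) (use sp in \<open>auto simp: less_imp_le\<close>)
  have ai: "(\<lambda>w. mu (s w) - D w - b) integrable_on {0..r}"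
    by (intro integrable_diff Di integrable_continuous_real[OF msc] integrable_const_ivl)
  have ab: "\<bar>mu (s w) - D w - b\<bar> \<le> Bm + max BD 0 + \<bar>b\<bar>" if w: "w \<in> {0..r} - ND" for w
  proof -
    have "\<bar>mu (s w)\<bar> \<le> Bm" using Bm(2)[of "s w"] sp[of w] w by auto
    moreover have "\<bar>D w\<bar> \<le> max BD 0" using DB[OF w] by simp
    ultimately show ?thesis by linarith
  qed
  show ?thesis
    by (rule lin_exp[where a="\<lambda>w. mu (s w) - D w - b", OF ai ND ab _ xc ax eq t])
       (use Bm in auto)
qed

lemma cont_sol:
  fixes y f :: "real \<Rightarrow> real"
  assumes f: "f integrable_on {0..r}" and eq: "\<And>t. t \<in> {0..r} \<Longrightarrow> y t = y 0 + integral {0..t} f"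
  shows "continuous_on {0..r} y"
proof -
  have "continuous_on {0..r} (\<lambda>t. y 0 + integral {0..t} f)"
    by (intro continuous_on_add continuous_on_const indefinite_integral_continuous_1 f)
  then show ?thesis by (rule continuous_on_eq) (metis eq)
qed

lemma abs_int: "f absolutely_integrable_on S \<Longrightarrow> f integrable_on S" for f :: "real \<Rightarrow> real"
  by (simp add: absolutely_integrable_on_def)

lemma ess_negl:
  assumes "ess_bounded_on S D"
  obtains N B where "negligible N" "\<And>w. w \<in> S - N \<Longrightarrow> \<bar>D w\<bar> \<le> B" "B \<ge> 0"
proof -
  obtain B where "AE t in lebesgue. t \<in> S \<longrightarrow> \<bar>D t\<bar> \<le> B" using assms unfolding ess_bounded_on_def by blast
  then obtain N where N: "negligible N" "{t. \<not> (t \<in> S \<longrightarrow> \<bar>D t\<bar> \<le> B)} \<subseteq> N"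
    unfolding eventually_ae_filter_negligible by blast
  show ?thesis by (rule that[of N "max B 0"]) (use N in auto)
qed

lemma D_int:
  fixes D :: "real \<Rightarrow> real"
  assumes m: "D measurable_on {0..r}" and N: "negligible N" and B: "\<And>w. w \<in> {0..r} - N \<Longrightarrow> \<bar>D w\<bar> \<le> BD"
    and B0: "BD \<ge> 0"
  shows "D integrable_on {0..r}"
proof -
  define D' where "D' = (\<lambda>w. if w \<in> N then 0 else D w)"
  have Dmo: "D' measurable_on {0..r}" by (rule measurable_on_spike[OF m N]) (auto simp: D'_def)
  moreover have S: "{0..r} \<in> sets lebesgue" by simp
  ultimately have Dm: "D' \<in> borel_measurable (lebesgue_on {0..r})"
    using measurable_on_iff_borel_measurable[OF S, where f=D'] Dmo by simp
  have "D' integrable_on {0..r}"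
  proof (rule measurable_bounded_by_integrable_imp_integrable[OF Dm _ _ S])
    show "(\<lambda>_. BD) integrable_on {0..r}" by (rule integrable_const_ivl)
    fix x assume x: "x \<in> {0..r}"
    show "norm (D' x) \<le> BD" using B[of x] x B0 by (simp add: D'_def)
  qed
  then show ?thesis by (rule integrable_spike[OF _ N]) (auto simp: D'_def)
qed

lemma phi_zero:
  fixes phi :: "real \<Rightarrow> real"
  assumes c: "continuous_on {0..r} phi" and r: "r > 0"
    and z: "\<And>t. t \<in> {0..r} \<Longrightarrow> integral {0..t} phi = 0" and t: "t \<in> {0..r}"
  shows "phi t = 0"
proof -
  have d1: "((\<lambda>x. integral {0..x} phi) has_real_derivative phi t) (at t within {0..r})"
    by (rule integral_has_real_derivative[OF c t])
  have d0: "((\<lambda>x. 0) has_real_derivative 0) (at t within {0..r})" by simp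
  have d2: "((\<lambda>x. integral {0..x} phi) has_real_derivative 0) (at t within {0..r})"
    by (rule has_field_derivative_transform_within[OF d0 zero_less_one t]) (use z in auto)
  show ?thesis
    using vector_derivative_unique_within_closed_interval[of 0 r t "\<lambda>x. integral {0..x} phi" "phi t" 0]
      d1 d2 r t unfolding has_real_derivative_iff_has_vector_derivative by auto
qed

theorem lemma2p4:
  fixes mu1 mu2 g1 g2 :: "real \<Rightarrow> real" and b1 b2 r :: real and sc :: "real option"
  assumes "rate_fun mu1" "rate_fun mu2" "rate_fun g1" "rate_fun g2"
    and "b1 \<ge> 0" "b2 \<ge> 0"
    and "\<forall>c. sc = Some c \<longrightarrow> c > 0"
    and "r > 0"
    and "\<not> strongly_observable mu1 mu2 g1 g2 b1 b2 sc r"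
  shows "\<exists>D s_in x1 x2 s.
     admissible_input sc r D s_in \<and>
     chemostat_sol mu1 mu2 g1 g2 b1 b2 sc r D s_in x1 x2 s \<and>
     (AE t in lborel. t \<in> {0..r} \<longrightarrow>
        (\<exists>ds. (s has_real_derivative ds) (at t) \<and>
           ds = D t * (s_in t - s t)
                - (x2 0 + g1 (s 0) / g2 (s 0) * x1 0) * g2 (s t)
                  * exp (integral {0..t} (\<lambda>w. mu2 (s w) - D w - b2)) \<and>
           kappa g1 g2 (s t) * ds = mu2 (s t) - mu1 (s t) + b1 - b2))"
proof -
  note mu1 = assms(1) and mu2 = assms(2) and g1 = assms(3) and g2 = assms(4) and r0 = assms(8)
  from assms(9) obtain D s_in x1 x2 s x1' x2' s' where
    adm: "admissible_input sc r D s_in"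
    and sol: "chemostat_sol mu1 mu2 g1 g2 b1 b2 sc r D s_in x1 x2 s"
    and sol': "chemostat_sol mu1 mu2 g1 g2 b1 b2 sc r D s_in x1' x2' s'"
    and ne: "(x1 0, x2 0, s 0) \<noteq> (x1' 0, x2' 0, s' 0)"
    and sup: "\<not> (SUP t\<in>{0..r}. \<bar>s t - s' t\<bar>) > 0"
    unfolding strongly_observable_def by blast
  define a1 where "a1 = (\<lambda>w. mu1 (s w) - D w - b1)"
  define a2 where "a2 = (\<lambda>w. mu2 (s w) - D w - b2)"
  define fs where "fs = (\<lambda>w. D w * (s_in w - s w) - g1 (s w) * x1 w - g2 (s w) * x2 w)"
  define fs' where "fs' = (\<lambda>w. D w * (s_in w - s' w) - g1 (s' w) * x1' w - g2 (s' w) * x2' w)"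
  have pos: "\<And>t. t \<in> {0..r} \<Longrightarrow> x1 t > 0 \<and> x2 t > 0 \<and> s t \<in> state_set sc"
    and i1: "(\<lambda>w. (mu1 (s w) - D w - b1) * x1 w) integrable_on {0..r}"
    and i2: "(\<lambda>w. (mu2 (s w) - D w - b2) * x2 w) integrable_on {0..r}"
    and i3: "fs integrable_on {0..r}"
    and e1: "\<And>t. t \<in> {0..r} \<Longrightarrow> x1 t = x1 0 + integral {0..t} (\<lambda>w. (mu1 (s w) - D w - b1) * x1 w)"
    and e2: "\<And>t. t \<in> {0..r} \<Longrightarrow> x2 t = x2 0 + integral {0..t} (\<lambda>w. (mu2 (s w) - D w - b2) * x2 w)"
    and e3: "\<And>t. t \<in> {0..r} \<Longrightarrow> s t = s 0 + integral {0..t} fs"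
    using sol unfolding chemostat_sol_def fs_def by (blast intro: abs_int)+
  have pos': "\<And>t. t \<in> {0..r} \<Longrightarrow> x1' t > 0 \<and> x2' t > 0 \<and> s' t \<in> state_set sc"
    and i1': "(\<lambda>w. (mu1 (s' w) - D w - b1) * x1' w) integrable_on {0..r}"
    and i2': "(\<lambda>w. (mu2 (s' w) - D w - b2) * x2' w) integrable_on {0..r}"
    and i3': "fs' integrable_on {0..r}"
    and e1': "\<And>t. t \<in> {0..r} \<Longrightarrow> x1' t = x1' 0 + integral {0..t} (\<lambda>w. (mu1 (s' w) - D w - b1) * x1' w)"
    and e2': "\<And>t. t \<in> {0..r} \<Longrightarrow> x2' t = x2' 0 + integral {0..t} (\<lambda>w. (mu2 (s' w) - D w - b2) * x2' w)"
    and e3': "\<And>t. t \<in> {0..r} \<Longrightarrow> s' t = s' 0 + integral {0..t} fs'"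
    using sol' unfolding chemostat_sol_def fs'_def by (blast intro: abs_int)+
  have ss: "u \<in> state_set sc \<Longrightarrow> u > 0" for u by (cases sc) (auto simp: state_set_def)
  have sp: "\<And>t. t \<in> {0..r} \<Longrightarrow> s t > 0" using pos ss by blast
  have sp': "\<And>t. t \<in> {0..r} \<Longrightarrow> s' t > 0" using pos' ss by blast
  have sc: "continuous_on {0..r} s" by (rule cont_sol[OF i3 e3])
  have sc': "continuous_on {0..r} s'" by (rule cont_sol[OF i3' e3'])
  have x1c: "continuous_on {0..r} x1" by (rule cont_sol[OF i1 e1])
  have x2c: "continuous_on {0..r} x2" by (rule cont_sol[OF i2 e2])
  have x1c': "continuous_on {0..r} x1'" by (rule cont_sol[OF i1' e1'])
  have x2c': "continuous_on {0..r} x2'" by (rule cont_sol[OF i2' e2'])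
  have Dm: "D measurable_on {0..r}" and Dess: "ess_bounded_on {0..r} D"
    using adm unfolding admissible_input_def by auto
  obtain ND BD where ND: "negligible ND" and DB: "\<And>w. w \<in> {0..r} - ND \<Longrightarrow> \<bar>D w\<bar> \<le> BD"
    and BD0: "BD \<ge> 0" using ess_negl[OF Dess] by blast
  have Di: "D integrable_on {0..r}" by (rule D_int[OF Dm ND DB BD0])
  have seq: "s t = s' t" if t: "t \<in> {0..r}" for t
  proof -
    have hc: "continuous_on {0..r} (\<lambda>t. \<bar>s t - s' t\<bar>)"
      by (intro continuous_intros sc sc')
    have "compact ((\<lambda>t. \<bar>s t - s' t\<bar>) ` {0..r})" by (rule compact_continuous_image[OF hc]) simp
    then have "bdd_above ((\<lambda>t. \<bar>s t - s' t\<bar>) ` {0..r})"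
      by (intro bounded_imp_bdd_above compact_imp_bounded)
    then have "\<bar>s t - s' t\<bar> \<le> (SUP t\<in>{0..r}. \<bar>s t - s' t\<bar>)" by (rule cSUP_upper[OF t])
    then show ?thesis using sup by simp
  qed
  have g1c: "continuous_on {0..r} (\<lambda>w. g1 (s w))"
    by (rule continuous_on_compose2[OF rate_cont[OF g1] sc]) (use sp in \<open>auto simp: less_imp_le\<close>)
  have g2c: "continuous_on {0..r} (\<lambda>w. g2 (s w))"
    by (rule continuous_on_compose2[OF rate_cont[OF g2] sc]) (use sp in \<open>auto simp: less_imp_le\<close>)
  have m1c: "continuous_on {0..r} (\<lambda>w. mu1 (s w))"
    by (rule continuous_on_compose2[OF rate_cont[OF mu1] sc]) (use sp in \<open>auto simp: less_imp_le\<close>)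
  have m2c: "continuous_on {0..r} (\<lambda>w. mu2 (s w))"
    by (rule continuous_on_compose2[OF rate_cont[OF mu2] sc]) (use sp in \<open>auto simp: less_imp_le\<close>)
  have a1i: "a1 integrable_on {0..r}" unfolding a1_def
    by (intro integrable_diff Di integrable_continuous_real[OF m1c] integrable_const_ivl)
  have a2i: "a2 integrable_on {0..r}" unfolding a2_def
    by (intro integrable_diff Di integrable_continuous_real[OF m2c] integrable_const_ivl)
  define E1 where "E1 = (\<lambda>t. integral {0..t} a1)"
  define E2 where "E2 = (\<lambda>t. integral {0..t} a2)"
  have E10: "E1 0 = 0" and E20: "E2 0 = 0" by (auto simp: E1_def E2_def)
  have ex1: "x1 t = x1 0 * exp (E1 t)" if t: "t \<in> {0..r}" for t
    unfolding E1_def a1_def by (rule comp_exp[OF mu1 sc sp Di ND DB x1c i1 e1 t])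
  have ex2: "x2 t = x2 0 * exp (E2 t)" if t: "t \<in> {0..r}" for t
    unfolding E2_def a2_def by (rule comp_exp[OF mu2 sc sp Di ND DB x2c i2 e2 t])
  have ex1': "x1' t = x1' 0 * exp (E1 t)" if t: "t \<in> {0..r}" for t
  proof -
    have "x1' t = x1' 0 * exp (integral {0..t} (\<lambda>w. mu1 (s' w) - D w - b1))"
      by (rule comp_exp[OF mu1 sc' sp' Di ND DB x1c' i1' e1' t])
    moreover have "integral {0..t} (\<lambda>w. mu1 (s' w) - D w - b1) = integral {0..t} a1"
      by (rule integral_cong) (use t seq in \<open>auto simp: a1_def\<close>)
    ultimately show ?thesis by (simp add: E1_def)
  qed
  have ex2': "x2' t = x2' 0 * exp (E2 t)" if t: "t \<in> {0..r}" for t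
  proof -
    have "x2' t = x2' 0 * exp (integral {0..t} (\<lambda>w. mu2 (s' w) - D w - b2))"
      by (rule comp_exp[OF mu2 sc' sp' Di ND DB x2c' i2' e2' t])
    moreover have "integral {0..t} (\<lambda>w. mu2 (s' w) - D w - b2) = integral {0..t} a2"
      by (rule integral_cong) (use t seq in \<open>auto simp: a2_def\<close>)
    ultimately show ?thesis by (simp add: E2_def)
  qed
  define phi where "phi = (\<lambda>w. g1 (s w) * (x1 w - x1' w) + g2 (s w) * (x2 w - x2' w))"
  have phic: "continuous_on {0..r} phi" unfolding phi_def
    by (intro continuous_intros g1c g2c x1c x2c x1c' x2c')
  have phiz: "integral {0..t} phi = 0" if t: "t \<in> {0..r}" for t
  proof -
    have A: "s t = s 0 + integral {0..t} fs" by (rule e3[OF t])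
    have B: "s' t = s' 0 + integral {0..t} fs'" by (rule e3'[OF t])
    have C: "s t = s' t" by (rule seq[OF t])
    have C0: "s 0 = s' 0" by (rule seq) (use r0 in simp)
    have I: "integral {0..t} fs' - integral {0..t} fs = 0" using A B C C0 by linarith
    have fst: "fs integrable_on {0..t}" by (rule integrable_on_subinterval[OF i3]) (use t in auto)
    have fst': "fs' integrable_on {0..t}" by (rule integrable_on_subinterval[OF i3']) (use t in auto)
    have "integral {0..t} fs' - integral {0..t} fs = integral {0..t} (\<lambda>w. fs' w - fs w)"
      by (rule integral_diff[symmetric, OF fst' fst])
    also have "\<dots> = integral {0..t} phi"
    proof (rule integral_cong)
      fix w assume "w \<in> {0..t}"
      then have "s w = s' w" using t by (intro seq) auto
      then show "fs' w - fs w = phi w" by (simp add: fs_def fs'_def phi_def algebra_simps)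
    qed
    finally show ?thesis using I by simp
  qed
  have phi0: "phi t = 0" if "t \<in> {0..r}" for t by (rule phi_zero[OF phic r0 phiz that])
  define z1 where "z1 = x1 0 - x1' 0"
  define z2 where "z2 = x2 0 - x2' 0"
  have R: "g1 (s t) * z1 * exp (E1 t) + g2 (s t) * z2 * exp (E2 t) = 0" if t: "t \<in> {0..r}" for t
  proof -
    have "phi t = g1 (s t) * (x1 0 * exp (E1 t) - x1' 0 * exp (E1 t)) + g2 (s t) * (x2 0 * exp (E2 t) - x2' 0 * exp (E2 t))"
      unfolding phi_def by (simp only: ex1[OF t] ex1'[OF t] ex2[OF t] ex2'[OF t])
    then show ?thesis using phi0[OF t] by (simp add: z1_def z2_def algebra_simps)
  qed
  have t0: "(0::real) \<in> {0..r}" using r0 by simp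
  have R0: "g1 (s 0) * z1 + g2 (s 0) * z2 = 0" using R[OF t0] by (simp add: E10 E20)
  have gp: "g1 (s t) > 0" "g2 (s t) > 0" if "t \<in> {0..r}" for t
    using g1 g2 sp[OF that] unfolding rate_fun_def by auto
  have z1nz: "z1 \<noteq> 0" and z2nz: "z2 \<noteq> 0"
  proof -
    have C0: "s 0 = s' 0" by (rule seq[OF t0])
    have "z1 = 0 \<longleftrightarrow> z2 = 0" using R0 gp[OF t0] by auto
    moreover have "\<not> (z1 = 0 \<and> z2 = 0)" using ne C0 by (auto simp: z1_def z2_def)
    ultimately show "z1 \<noteq> 0" "z2 \<noteq> 0" by auto
  qed
  define c0 where "c0 = g1 (s 0) / g2 (s 0)"
  have c0pos: "c0 > 0" using gp[OF t0] by (simp add: c0_def)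
  have c0z: "c0 = - z2 / z1"
  proof -
    have "g1 (s 0) * z1 = - (g2 (s 0) * z2)" using R0 by linarith
    then show ?thesis using z1nz gp[OF t0] unfolding c0_def by (simp add: field_simps)
  qed
  have key: "g1 (s t) * exp (E1 t) = c0 * g2 (s t) * exp (E2 t)" if t: "t \<in> {0..r}" for t
  proof -
    have "g1 (s t) * exp (E1 t) * z1 = - (z2 * g2 (s t) * exp (E2 t))" using R[OF t]
      by (simp add: algebra_simps)
    then show ?thesis using z1nz unfolding c0z by (simp add: field_simps)
  qed
  have Lc: "ln (g1 (s u) / g2 (s u)) + E1 u - E2 u = ln c0" if u: "u \<in> {0..r}" for u
  proof -
    have "g1 (s u) / g2 (s u) = c0 * exp (E2 u - E1 u)"
      using key[OF u] gp[OF u] by (simp add: field_simps exp_diff)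
    then have "ln (g1 (s u) / g2 (s u)) = ln c0 + (E2 u - E1 u)"
      using c0pos by (simp add: ln_mult)
    then show ?thesis by simp
  qed
  obtain N1 where N1: "negligible N1"
    and d1: "\<And>t. t \<in> {0<..<r} - N1 \<Longrightarrow> (E1 has_real_derivative a1 t) (at t)"
    using lebesgue_diff[OF a1i] unfolding E1_def by blast
  obtain N2 where N2: "negligible N2"
    and d2: "\<And>t. t \<in> {0<..<r} - N2 \<Longrightarrow> (E2 has_real_derivative a2 t) (at t)"
    using lebesgue_diff[OF a2i] unfolding E2_def by blast
  obtain N3 where N3: "negligible N3"
    and d3: "\<And>t. t \<in> {0<..<r} - N3 \<Longrightarrow> ((\<lambda>u. integral {0..u} fs) has_real_derivative fs t) (at t)"
    using lebesgue_diff[OF i3] by blast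
  have main: "\<exists>ds. (s has_real_derivative ds) (at t) \<and>
           ds = D t * (s_in t - s t)
                - (x2 0 + g1 (s 0) / g2 (s 0) * x1 0) * g2 (s t)
                  * exp (integral {0..t} (\<lambda>w. mu2 (s w) - D w - b2)) \<and>
           kappa g1 g2 (s t) * ds = mu2 (s t) - mu1 (s t) + b1 - b2"
    if t: "t \<in> {0<..<r} - (N1 \<union> N2 \<union> N3)" for t
  proof (intro exI conjI)
    have tt: "t \<in> {0..r}" using t by auto
    have dI: "((\<lambda>u. s 0 + integral {0..u} fs) has_real_derivative fs t) (at t)"
      using DERIV_add[OF DERIV_const d3[of t]] t by simp
    show dS: "(s has_real_derivative fs t) (at t)"
    proof (rule has_field_derivative_transform_within_open[OF dI, of "{0<..<r}"])
      show "open {0<..<r}" by simp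
      show "t \<in> {0<..<r}" using t by simp
      fix x assume "x \<in> {0<..<r}"
      then have "x \<in> {0..r}" by simp
      from e3[OF this] show "s 0 + integral {0..x} fs = s x" by simp
    qed
    have h1: "g1 (s t) * x1 t = x1 0 * (c0 * g2 (s t) * exp (E2 t))"
    proof -
      have "g1 (s t) * x1 t = x1 0 * (g1 (s t) * exp (E1 t))"
        by (subst ex1[OF tt]) (simp add: ac_simps)
      also have "\<dots> = x1 0 * (c0 * g2 (s t) * exp (E2 t))" by (simp only: key[OF tt])
      finally show ?thesis .
    qed
    have h2: "g2 (s t) * x2 t = x2 0 * g2 (s t) * exp (E2 t)"
      by (subst ex2[OF tt]) (simp add: ac_simps)
    show "fs t = D t * (s_in t - s t)
                - (x2 0 + g1 (s 0) / g2 (s 0) * x1 0) * g2 (s t)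
                  * exp (integral {0..t} (\<lambda>w. mu2 (s w) - D w - b2))"
    proof -
      have "integral {0..t} (\<lambda>w. mu2 (s w) - D w - b2) = E2 t" by (simp add: E2_def a2_def)
      moreover have "fs t = D t * (s_in t - s t) - (x2 0 + c0 * x1 0) * g2 (s t) * exp (E2 t)"
      proof -
        have "fs t = D t * (s_in t - s t) - g1 (s t) * x1 t - g2 (s t) * x2 t" by (simp add: fs_def)
        also have "\<dots> = D t * (s_in t - s t) - x1 0 * (c0 * g2 (s t) * exp (E2 t))
                       - x2 0 * g2 (s t) * exp (E2 t)" by (simp only: h1 h2)
        also have "\<dots> = D t * (s_in t - s t) - (x2 0 + c0 * x1 0) * g2 (s t) * exp (E2 t)"
          by (simp add: algebra_simps)
        finally show ?thesis .
      qed
      ultimately show ?thesis by (simp add: c0_def)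
    qed
    have dln: "((\<lambda>u. ln (g1 (s u) / g2 (s u))) has_real_derivative kappa g1 g2 (s t) * fs t) (at t)"
      by (rule DERIV_chain2[OF kappa_deriv[OF g1 g2 sp[OF tt]] dS])
    have dL: "((\<lambda>u. ln (g1 (s u) / g2 (s u)) + E1 u - E2 u) has_real_derivative
                kappa g1 g2 (s t) * fs t + a1 t - a2 t) (at t)"
      by (rule DERIV_diff[OF DERIV_add[OF dln d1] d2]) (use t in auto)
    have dL0: "((\<lambda>u. ln (g1 (s u) / g2 (s u)) + E1 u - E2 u) has_real_derivative 0) (at t)"
    proof (rule has_field_derivative_transform_within_open[OF DERIV_const[of "ln c0"], of "{0<..<r}"])
      show "open {0<..<r}" by simp
      show "t \<in> {0<..<r}" using t by simp
      fix x assume "x \<in> {0<..<r}"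
      then have "x \<in> {0..r}" by simp
      then show "ln c0 = ln (g1 (s x) / g2 (s x)) + E1 x - E2 x" using Lc by simp
    qed
    have "kappa g1 g2 (s t) * fs t + a1 t - a2 t = 0" by (rule DERIV_unique[OF dL dL0])
    then show "kappa g1 g2 (s t) * fs t = mu2 (s t) - mu1 (s t) + b1 - b2"
      by (simp add: a1_def a2_def)
  qed
  have AEl: "AE t in lebesgue. t \<in> {0..r} \<longrightarrow>
        (\<exists>ds. (s has_real_derivative ds) (at t) \<and>
           ds = D t * (s_in t - s t)
                - (x2 0 + g1 (s 0) / g2 (s 0) * x1 0) * g2 (s t)
                  * exp (integral {0..t} (\<lambda>w. mu2 (s w) - D w - b2)) \<and>
           kappa g1 g2 (s t) * ds = mu2 (s t) - mu1 (s t) + b1 - b2)"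
    unfolding eventually_ae_filter_negligible
  proof (intro exI[of _ "N1 \<union> N2 \<union> N3 \<union> {0, r}"] conjI)
    show "negligible (N1 \<union> N2 \<union> N3 \<union> {0, r})" using N1 N2 N3 by auto
    show "{t. \<not> (t \<in> {0..r} \<longrightarrow> (\<exists>ds. (s has_real_derivative ds) (at t) \<and>
           ds = D t * (s_in t - s t)
                - (x2 0 + g1 (s 0) / g2 (s 0) * x1 0) * g2 (s t)
                  * exp (integral {0..t} (\<lambda>w. mu2 (s w) - D w - b2)) \<and>
           kappa g1 g2 (s t) * ds = mu2 (s t) - mu1 (s t) + b1 - b2))}
          \<subseteq> N1 \<union> N2 \<union> N3 \<union> {0, r}"
    proof
      fix t assume "t \<in> {t. \<not> (t \<in> {0..r} \<longrightarrow> (\<exists>ds. (s has_real_derivative ds) (at t) \<and>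
           ds = D t * (s_in t - s t)
                - (x2 0 + g1 (s 0) / g2 (s 0) * x1 0) * g2 (s t)
                  * exp (integral {0..t} (\<lambda>w. mu2 (s w) - D w - b2)) \<and>
           kappa g1 g2 (s t) * ds = mu2 (s t) - mu1 (s t) + b1 - b2))}"
      then have a: "t \<in> {0..r}" and b: "\<not> (\<exists>ds. (s has_real_derivative ds) (at t) \<and>
           ds = D t * (s_in t - s t)
                - (x2 0 + g1 (s 0) / g2 (s 0) * x1 0) * g2 (s t)
                  * exp (integral {0..t} (\<lambda>w. mu2 (s w) - D w - b2)) \<and>
           kappa g1 g2 (s t) * ds = mu2 (s t) - mu1 (s t) + b1 - b2)" by auto
      show "t \<in> N1 \<union> N2 \<union> N3 \<union> {0, r}"
      proof (rule ccontr)
        assume "t \<notin> N1 \<union> N2 \<union> N3 \<union> {0, r}"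
        then have "t \<in> {0<..<r} - (N1 \<union> N2 \<union> N3)" using a by auto
        then show False using main b by blast
      qed
    qed
  qed
  show ?thesis
  proof (intro exI conjI)
    show "admissible_input sc r D s_in" by (rule adm)
    show "chemostat_sol mu1 mu2 g1 g2 b1 b2 sc r D s_in x1 x2 s" by (rule sol)
    show "AE t in lborel. t \<in> {0..r} \<longrightarrow>
        (\<exists>ds. (s has_real_derivative ds) (at t) \<and>
           ds = D t * (s_in t - s t)
                - (x2 0 + g1 (s 0) / g2 (s 0) * x1 0) * g2 (s t)
                  * exp (integral {0..t} (\<lambda>w. mu2 (s w) - D w - b2)) \<and>
           kappa g1 g2 (s t) * ds = mu2 (s t) - mu1 (s t) + b1 - b2)"
      using AEl by (simp only: AE_completion_iff)
  qed
qed

end
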